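(* The Bergman projection $P$ on the Hartogs triangle $\mathbb{H}$ is not of weak-type $(4/3,4/3)$: there is no constant $C>0$ such that for all $f\in L^{4/3}(\mathbb{H})$ for which the integral defining $P(f)$ converges absolutely, and all $\lambda>0$, $$\left|\{z\in\mathbb{H} : |P(f)(z)|>\lambda\}\right| \le \frac{C\,\|f\|^{4/3}_{L^{4/3}(\mathbb{H})}}{\lambda^{4/3}}.$$
   Context: The Hartogs triangle is $\mathbb{H}=\{(z_1,z_2)\in\mathbb{C}^2:|z_1|<|z_2|<1\}$; $dV$ is Lebesgue measure and $|U|$ the Lebesgue measure of $U$. The Bergman projection on $\mathbb{H}$ (orthogonal projection of $L^2(\mathbb{H})$ onto holomorphic $L^2$ functions) is $P(f)(z)=\int_{\mathbb{H}}K_{\mathbb{H}}(z;\bar w)f(w)\,dV(w)$ with $$K_{\mathbb{H}}(z_1,z_2;\bar w_1,\bar w_2)=\frac{1}{\pi^2 z_2\bar w_2\left(1-\frac{z_1\bar w_1}{z_2\bar w_2}\right)^2(1-z_2\bar w_2)^2}.$$ *)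

theory Defs
  imports "HOL-Analysis.Analysis"
begin

text \<open>Points of C^2 are pairs (z1, z2) :: complex \<times> complex; Lebesgue measure on C^2 = R^4
  is the measure lebesgue on this Euclidean space.\<close>

definition hartogs :: "(complex \<times> complex) set" where
  "hartogs = {(z1, z2). cmod z1 < cmod z2 \<and> cmod z2 < 1}"

definition hartogs_kernel :: "complex \<times> complex \<Rightarrow> complex \<times> complex \<Rightarrow> complex" where
  "hartogs_kernel z w =
     1 / (complex_of_real (pi ^ 2) * snd z * cnj (snd w)
          * (1 - (fst z * cnj (fst w)) / (snd z * cnj (snd w))) ^ 2
          * (1 - snd z * cnj (snd w)) ^ 2)"

definition bergman_proj :: "(complex \<times> complex \<Rightarrow> complex) \<Rightarrow> complex \<times> complex \<Rightarrow> complex" where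
  "bergman_proj f z = (LINT w:hartogs|lebesgue. hartogs_kernel z w * f w)"

end

theory Submission
  imports Defs
begin


definition RR :: "real \<Rightarrow> (complex \<times> complex) set" where
  "RR r = {w. cmod (fst w) < cmod (snd w) \<and> r < cmod (snd w) \<and> cmod (snd w) < 1}"
definition ff :: "real \<Rightarrow> complex \<times> complex \<Rightarrow> complex" where
  "ff r w = (if w \<in> RR r then 1 / (snd w * (complex_of_real (cmod (snd w)))^2) else 0)"
definition psi :: "real \<Rightarrow> complex \<times> complex \<Rightarrow> real" where
  "psi r w = indicator (RR r) w * cmod (snd w) powr (-4)"
definition cz :: "complex \<times> complex \<Rightarrow> complex" where
  "cz z = 1 / (complex_of_real (pi^2) * snd z)"
definition Gz :: "complex \<times> complex \<Rightarrow> complex \<times> complex \<Rightarrow> complex" where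
  "Gz z w = 1 / ((1 - (fst z * cnj (fst w)) / (snd z * cnj (snd w)))^2 * (1 - snd z * cnj (snd w))^2)"

lemma RR_sub: "RR r \<subseteq> hartogs"
  unfolding RR_def hartogs_def by auto

lemma ff_out: "w \<notin> RR r \<Longrightarrow> ff r w = 0"
  unfolding ff_def by simp

lemma psi_nonneg: "0 \<le> psi r w"
  unfolding psi_def by (simp add: indicator_def)

lemma ff_powr: "cmod (ff r w) powr (4/3) = psi r w"
proof (cases "w \<in> RR r")
  case True
  then have p: "cmod (snd w) > 0" unfolding RR_def by auto
  have "cmod (ff r w) = 1 / cmod (snd w) ^ 3"
    using True by (simp add: ff_def norm_divide norm_mult norm_power power3_eq_cube power2_eq_square)
  also have "\<dots> = cmod (snd w) powr (-3)"
    using p by (simp add: powr_minus_divide powr_realpow)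
  finally have "cmod (ff r w) powr (4/3) = cmod (snd w) powr (-3 * (4/3))"
    by (simp add: powr_powr)
  then show ?thesis using True by (simp add: psi_def)
next
  case False
  then show ?thesis by (simp add: ff_out psi_def)
qed

lemma Kf_eq:
  assumes z: "z \<in> hartogs" and w: "w \<in> RR r"
  shows "hartogs_kernel z w * ff r w = cz z * complex_of_real (psi r w) * Gz z w"
proof -
  obtain z1 z2 where zz: "z = (z1, z2)" by (cases z)
  obtain w1 w2 where ww: "w = (w1, w2)" by (cases w)
  have z2: "z2 \<noteq> 0" using z zz unfolding hartogs_def by auto
  have w2: "w2 \<noteq> 0" and w2p: "cmod w2 > 0" using w ww unfolding RR_def by auto
  have cw: "cnj w2 * w2 = complex_of_real (cmod w2 ^ 2)"
    by (metis complex_norm_square of_real_power mult.commute)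
  have pw: "cmod w2 powr (-4) = 1 / cmod w2 ^ 4"
    using w2p by (simp add: powr_minus_divide powr_realpow)
  define A where "A = (1 - z1 * cnj w1 / (z2 * cnj w2))^2"
  define B where "B = (1 - z2 * cnj w2)^2"
  have "hartogs_kernel z w * ff r w = 1 / (complex_of_real (pi^2) * z2 * (cnj w2 * w2) * (complex_of_real (cmod w2))^2 * A * B)"
    using w by (simp add: hartogs_kernel_def ff_def zz ww A_def B_def)
  also have "\<dots> = 1 / (complex_of_real (pi^2) * z2 * (complex_of_real (cmod w2))^4 * A * B)"
    unfolding cw by (simp add: power_def algebra_simps)
  also have "\<dots> = cz z * complex_of_real (psi r w) * Gz z w"
    using w by (simp add: cz_def Gz_def psi_def zz ww pw A_def B_def)
  finally show ?thesis .
qed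

lemma Kf_out: "w \<notin> RR r \<Longrightarrow> hartogs_kernel z w * ff r w = 0"
  by (simp add: ff_out)

lemma uv_bounds:
  assumes z: "z \<in> hartogs" and w: "w \<in> hartogs"
  shows "cmod ((fst z * cnj (fst w)) / (snd z * cnj (snd w))) \<le> cmod (fst z) / cmod (snd z)"
    and "cmod (snd z * cnj (snd w)) \<le> cmod (snd z)"
proof -
  obtain z1 z2 where zz: "z = (z1, z2)" by (cases z)
  obtain w1 w2 where ww: "w = (w1, w2)" by (cases w)
  have h: "cmod z1 < cmod z2" "cmod z2 < 1" "cmod w1 < cmod w2" "cmod w2 < 1"
    using z w zz ww unfolding hartogs_def by auto
  have p: "cmod w2 > 0" "cmod z2 > 0" using h norm_ge_zero[of w1] norm_ge_zero[of z1] by linarith+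
  have "cmod ((z1 * cnj w1) / (z2 * cnj w2)) = (cmod z1 / cmod z2) * (cmod w1 / cmod w2)"
    by (simp add: norm_divide norm_mult)
  also have "\<dots> \<le> (cmod z1 / cmod z2) * 1"
    using h p by (intro mult_left_mono) auto
  finally show "cmod ((fst z * cnj (fst w)) / (snd z * cnj (snd w))) \<le> cmod (fst z) / cmod (snd z)"
    by (simp add: zz ww)
  have "cmod (z2 * cnj w2) \<le> cmod z2 * 1"
    unfolding norm_mult complex_mod_cnj using h by (intro mult_left_mono) auto
  then show "cmod (snd z * cnj (snd w)) \<le> cmod (snd z)" by (simp add: zz ww)
qed

lemma G_gen:
  fixes u v :: complex
  assumes "cmod u \<le> q" "q < 1" "cmod v \<le> p" "p < 1"
  shows "cmod (1 / ((1 - u)^2 * (1 - v)^2)) \<le> 1 / ((1 - q)^2 * (1 - p)^2)"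
proof -
  have a: "cmod (1 - u) \<ge> 1 - q" using norm_triangle_ineq2[of 1 u] assms by simp
  have b: "cmod (1 - v) \<ge> 1 - p" using norm_triangle_ineq2[of 1 v] assms by simp
  have "(1 - q)^2 * (1 - p)^2 \<le> cmod (1 - u)^2 * cmod (1 - v)^2"
    using a b assms by (intro mult_mono power_mono) auto
  moreover have "0 < (1 - q)^2 * (1 - p)^2" using assms by auto
  ultimately show ?thesis
    by (simp add: norm_divide norm_mult norm_power frac_le)
qed

lemma G_small:
  fixes u v :: complex
  assumes "cmod u \<le> 1/20" "cmod v \<le> 1/20"
  shows "cmod (1 / ((1 - u)^2 * (1 - v)^2) - 1) \<le> 1/3"
proof -
  define aa where "aa = u^2 - 2 * u"
  define bb where "bb = v^2 - 2 * v"
  have na: "cmod aa \<le> 41/400"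
  proof -
    have "cmod aa \<le> cmod u ^ 2 + 2 * cmod u"
      unfolding aa_def using norm_triangle_ineq4[of "u^2" "2 * u"] by (simp add: norm_power norm_mult)
    also have "\<dots> \<le> (1/20)^2 + 2 * (1/20)"
      using assms by (intro add_mono power_mono) auto
    finally show ?thesis by (simp add: power2_eq_square)
  qed
  have nb: "cmod bb \<le> 41/400"
  proof -
    have "cmod bb \<le> cmod v ^ 2 + 2 * cmod v"
      unfolding bb_def using norm_triangle_ineq4[of "v^2" "2 * v"] by (simp add: norm_power norm_mult)
    also have "\<dots> \<le> (1/20)^2 + 2 * (1/20)"
      using assms by (intro add_mono power_mono) auto
    finally show ?thesis by (simp add: power2_eq_square)
  qed
  define p where "p = (1 - u)^2 * (1 - v)^2"
  have pe: "p = (1 + aa) * (1 + bb)" unfolding p_def aa_def bb_def by (simp add: power2_eq_square algebra_simps)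
  have "cmod (p - 1) = cmod (aa + bb + aa * bb)" unfolding pe by (simp add: algebra_simps)
  also have "\<dots> \<le> cmod aa + cmod bb + cmod aa * cmod bb"
    using norm_triangle_ineq[of "aa + bb" "aa * bb"] norm_triangle_ineq[of aa bb] by (simp add: norm_mult)
  also have "\<dots> \<le> 41/400 + 41/400 + (41/400) * (41/400)"
    using na nb by (intro add_mono mult_mono) auto
  also have "\<dots> \<le> 1/4" by simp
  finally have d: "cmod (p - 1) \<le> 1/4" .
  have pp: "cmod p \<ge> 3/4" using norm_triangle_ineq2[of 1 p] d by (simp add: norm_minus_commute)
  then have pnz: "p \<noteq> 0" by auto
  have "1 / p - 1 = (1 - p) / p" using pnz by (simp add: field_simps)
  then have "cmod (1 / p - 1) = cmod (p - 1) / cmod p" by (simp add: norm_divide norm_minus_commute)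
  also have "\<dots> \<le> (1/4) / (3/4)"
    using d pp by (intro frac_le) auto
  finally show ?thesis unfolding p_def by simp
qed



lemma cnj_meas[measurable]: "cnj \<in> borel_measurable borel"
  by (intro borel_measurable_continuous_onI continuous_intros)
lemma fst_meas[measurable]: "(fst :: complex \<times> complex \<Rightarrow> complex) \<in> borel_measurable borel"
  by (intro borel_measurable_continuous_onI continuous_intros)
lemma snd_meas[measurable]: "(snd :: complex \<times> complex \<Rightarrow> complex) \<in> borel_measurable borel"
  by (intro borel_measurable_continuous_onI continuous_intros)

lemma RR_borel[measurable]: "RR r \<in> sets borel"
proof -
  have "RR r = {w \<in> space borel. cmod (fst w) < cmod (snd w) \<and> r < cmod (snd w) \<and> cmod (snd w) < 1}"
    unfolding RR_def by auto
  also have "\<dots> \<in> sets borel" by measurable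
  finally show ?thesis .
qed
lemma hartogs_borel[measurable]: "hartogs \<in> sets borel"
proof -
  have "hartogs = {w \<in> space borel. cmod (fst w) < cmod (snd w) \<and> cmod (snd w) < 1}"
    unfolding hartogs_def by auto
  also have "\<dots> \<in> sets borel" by measurable
  finally show ?thesis .
qed

lemma ff_meas[measurable]: "ff r \<in> borel_measurable borel"
  unfolding ff_def by measurable
lemma psi_meas[measurable]: "psi r \<in> borel_measurable borel"
  unfolding psi_def by measurable

lemma p_meas[measurable]:
  "(\<lambda>p::(complex \<times> complex) \<times> (complex \<times> complex). fst (fst p)) \<in> borel_measurable borel"
  "(\<lambda>p::(complex \<times> complex) \<times> (complex \<times> complex). snd (fst p)) \<in> borel_measurable borel"
  "(\<lambda>p::(complex \<times> complex) \<times> (complex \<times> complex). fst (snd p)) \<in> borel_measurable borel"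
  "(\<lambda>p::(complex \<times> complex) \<times> (complex \<times> complex). snd (snd p)) \<in> borel_measurable borel"
  "(\<lambda>p::(complex \<times> complex) \<times> (complex \<times> complex). snd p) \<in> borel_measurable borel"
  by (intro borel_measurable_continuous_onI continuous_intros)+

lemma K_meas: "(\<lambda>p. hartogs_kernel (fst p) (snd p) * ff r (snd p)) \<in> borel_measurable borel"
  unfolding hartogs_kernel_def by measurable

lemma Kz_meas[measurable]: "(\<lambda>w. hartogs_kernel z w * ff r w) \<in> borel_measurable borel"
  unfolding hartogs_kernel_def by measurable

lemma hartogs_bounded: "bounded hartogs"
  unfolding bounded_iff
proof (intro exI ballI)
  fix w assume "w \<in> hartogs"
  then have "cmod (fst w) < 1" "cmod (snd w) < 1" unfolding hartogs_def by auto
  then show "norm w \<le> 2" using norm_Pair_le[of "fst w" "snd w"] by simp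
qed

lemma hartogs_fin: "emeasure lborel hartogs < \<infinity>"
  using emeasure_bounded_finite[OF hartogs_bounded] .

lemma psi_bound:
  assumes r: "0 < r"
  shows "psi r w \<le> r powr (-4) * indicator hartogs w"
proof (cases "w \<in> RR r")
  case True
  then have "r < cmod (snd w)" unfolding RR_def by auto
  then have "cmod (snd w) powr (-4) \<le> r powr (-4)"
    using r by (intro powr_mono2') auto
  moreover have "w \<in> hartogs" using True RR_sub by blast
  ultimately show ?thesis using True by (auto simp: psi_def)
next
  case False then show ?thesis by (simp add: psi_def indicator_def)
qed

lemma psi_int: assumes "0 < r" shows "integrable lborel (psi r)"
proof (rule Bochner_Integration.integrable_bound)
  show "integrable lborel (\<lambda>w. r powr (-4) * indicator hartogs w :: real)"
    using hartogs_fin by (intro integrable_mult_right integrable_real_indicator) auto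
  show "psi r \<in> borel_measurable lborel" by simp
  show "AE x in lborel. norm (psi r x) \<le> norm (r powr (-4) * indicator hartogs x :: real)"
    using psi_bound[OF assms] psi_nonneg by (intro AE_I2) (auto intro: order_trans)
qed

definition Mz :: "complex \<times> complex \<Rightarrow> real" where
  "Mz z = 1 / ((1 - cmod (fst z) / cmod (snd z))^2 * (1 - cmod (snd z))^2)"

lemma Mz_nonneg: "0 \<le> Mz z"
  unfolding Mz_def by simp

lemma Kf_bound:
  assumes z: "z \<in> hartogs"
  shows "cmod (hartogs_kernel z w * ff r w) \<le> cmod (cz z) * Mz z * psi r w"
proof (cases "w \<in> RR r")
  case True
  have w: "w \<in> hartogs" using True RR_sub by auto
  have h: "cmod (fst z) < cmod (snd z)" "cmod (snd z) < 1" using z unfolding hartogs_def by auto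
  have G: "cmod (Gz z w) \<le> Mz z"
    unfolding Gz_def Mz_def
  proof (rule G_gen[OF uv_bounds(1)[OF z w] _ uv_bounds(2)[OF z w]])
    have "0 < cmod (snd z)" using h norm_ge_zero[of "fst z"] by linarith
    then show "cmod (fst z) / cmod (snd z) < 1" using h by (simp add: divide_less_eq)
  qed (use h in auto)
  have "cmod (hartogs_kernel z w * ff r w) = (cmod (cz z) * psi r w) * cmod (Gz z w)"
    unfolding Kf_eq[OF z True] norm_mult using psi_nonneg[of r w] by simp
  also have "\<dots> \<le> (cmod (cz z) * psi r w) * Mz z"
    using G psi_nonneg[of r w] by (intro mult_left_mono) auto
  finally show ?thesis by (simp add: mult_ac)
next
  case False
  then show ?thesis by (simp add: ff_out psi_def)
qed

lemma Kf_int: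
  assumes z: "z \<in> hartogs" and r: "0 < r"
  shows "integrable lborel (\<lambda>w. hartogs_kernel z w * ff r w)"
proof (rule Bochner_Integration.integrable_bound)
  show "integrable lborel (\<lambda>w. cmod (cz z) * Mz z * psi r w)"
    using psi_int[OF r] by (intro integrable_mult_right)
  show "(\<lambda>w. hartogs_kernel z w * ff r w) \<in> borel_measurable lborel" by simp
  have "norm (cmod (cz z) * Mz z * psi r w) = cmod (cz z) * Mz z * psi r w" for w
    using Mz_nonneg[of z] psi_nonneg[of r w] by simp
  then show "AE w in lborel. norm (hartogs_kernel z w * ff r w) \<le> norm (cmod (cz z) * Mz z * psi r w)"
    using Kf_bound[OF z] by (intro AE_I2) simp
qed

lemma ind_ff: "indicator hartogs w *\<^sub>R ff r w = ff r w"
proof (cases "w \<in> RR r")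
  case True
  then have "w \<in> hartogs" using RR_sub by blast
  then show ?thesis by simp
qed (simp add: ff_out)

lemma ind_Kf: "indicator hartogs w *\<^sub>R (hartogs_kernel z w * ff r w) = hartogs_kernel z w * ff r w"
proof (cases "w \<in> RR r")
  case True
  then have "w \<in> hartogs" using RR_sub by blast
  then show ?thesis by simp
qed (simp add: ff_out)



definition c0 :: "complex \<times> complex" where "c0 = (0, 1/40)"

lemma ball_props:
  assumes "z \<in> ball c0 (1/1000)"
  shows "z \<in> hartogs" "cmod (fst z) / cmod (snd z) \<le> 1/20" "cmod (snd z) \<le> 1/20"
    "cmod (snd z) < 2/3" "0 < cmod (snd z)"
proof -
  have zc: "z - c0 = (fst z - 0, snd z - 1/40)" by (cases z) (simp add: c0_def)
  have d: "norm (fst z - 0, snd z - 1/40) < 1/1000"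
    using assms unfolding zc[symmetric] by (simp add: dist_norm norm_minus_commute)
  have a: "cmod (fst z) < 1/1000" using norm_fst_le[where x="fst z - 0" and y="snd z - 1/40"] d by simp
  have b: "cmod (snd z - 1/40) < 1/1000" using norm_snd_le[where x="fst z - 0" and y="snd z - 1/40"] d by simp
  have b1: "cmod (snd z) > 24/1000"
    using norm_triangle_ineq2[of "1/40" "snd z"] b by (simp add: norm_minus_commute)
  have b2: "cmod (snd z) < 26/1000"
    using norm_triangle_ineq2[of "snd z" "1/40"] b by simp
  show "0 < cmod (snd z)" using b1 by linarith
  show "cmod (snd z) \<le> 1/20" "cmod (snd z) < 2/3" using b2 by simp_all
  show "z \<in> hartogs" using a b1 b2 unfolding hartogs_def by (cases z) auto
  have "cmod (fst z) \<le> 1/20 * cmod (snd z)" using a b1 by simp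
  then show "cmod (fst z) / cmod (snd z) \<le> 1/20" using b1 by (simp add: divide_le_eq mult.commute)
qed

lemma diff_bound:
  assumes z: "z \<in> ball c0 (1/1000)"
  shows "cmod (hartogs_kernel z w * ff r w - cz z * complex_of_real (psi r w)) \<le> cmod (cz z) * psi r w / 3"
proof (cases "w \<in> RR r")
  case True
  have zH: "z \<in> hartogs" using ball_props[OF z] by simp
  have w: "w \<in> hartogs" using True RR_sub by auto
  have G: "cmod (Gz z w - 1) \<le> 1/3"
    unfolding Gz_def
  proof (rule G_small)
    show "cmod (fst z * cnj (fst w) / (snd z * cnj (snd w))) \<le> 1/20"
      using uv_bounds(1)[OF zH w] ball_props(2)[OF z] by linarith
    show "cmod (snd z * cnj (snd w)) \<le> 1/20"
      using uv_bounds(2)[OF zH w] ball_props(3)[OF z] by linarith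
  qed
  have "hartogs_kernel z w * ff r w - cz z * complex_of_real (psi r w) = (cz z * complex_of_real (psi r w)) * (Gz z w - 1)"
    unfolding Kf_eq[OF zH True] by (simp add: algebra_simps)
  then have "cmod (hartogs_kernel z w * ff r w - cz z * complex_of_real (psi r w)) = (cmod (cz z) * psi r w) * cmod (Gz z w - 1)"
    using psi_nonneg[of r w] by (simp add: norm_mult)
  also have "\<dots> \<le> (cmod (cz z) * psi r w) * (1/3)"
    using G psi_nonneg[of r w] by (intro mult_left_mono) auto
  finally show ?thesis by simp
next
  case False
  then show ?thesis by (simp add: ff_out psi_def)
qed

lemma main_est:
  assumes z: "z \<in> ball c0 (1/1000)" and r: "0 < r"
  shows "cmod (\<integral>w. hartogs_kernel z w * ff r w \<partial>lborel) \<ge> (2/3) * (cmod (cz z) * (\<integral>w. psi r w \<partial>lborel))"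
proof -
  have zH: "z \<in> hartogs" using ball_props[OF z] by simp
  define A where "A = (\<integral>w. psi r w \<partial>lborel)"
  have A0: "0 \<le> A" unfolding A_def using psi_nonneg by (simp add: integral_nonneg_AE)
  have i1: "integrable lborel (\<lambda>w. hartogs_kernel z w * ff r w)" using Kf_int[OF zH r] .
  have i2: "integrable lborel (\<lambda>w. cz z * complex_of_real (psi r w))"
    using psi_int[OF r] by (intro integrable_mult_right integrable_of_real)
  have i3: "integrable lborel (\<lambda>w. cmod (cz z) * psi r w / 3)"
    using psi_int[OF r] by (intro integrable_divide integrable_mult_right)
  have eq: "(\<integral>w. hartogs_kernel z w * ff r w \<partial>lborel)
      = (\<integral>w. hartogs_kernel z w * ff r w - cz z * complex_of_real (psi r w) \<partial>lborel) + cz z * complex_of_real A"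
    using i1 i2 by (simp add: A_def)
  have "cmod (\<integral>w. hartogs_kernel z w * ff r w - cz z * complex_of_real (psi r w) \<partial>lborel)
      \<le> (\<integral>w. cmod (cz z) * psi r w / 3 \<partial>lborel)"
    by (rule Bochner_Integration.integral_norm_bound_integral[OF Bochner_Integration.integrable_diff[OF i1 i2] i3 diff_bound[OF z]])
  also have "\<dots> = cmod (cz z) * A / 3" by (simp add: A_def)
  finally have e: "cmod (\<integral>w. hartogs_kernel z w * ff r w - cz z * complex_of_real (psi r w) \<partial>lborel) \<le> cmod (cz z) * A / 3" .
  have n: "cmod (cz z * complex_of_real A) = cmod (cz z) * A" using A0 by (simp add: norm_mult)
  define X where "X = (\<integral>w. hartogs_kernel z w * ff r w \<partial>lborel)"
  define Y where "Y = (\<integral>w. hartogs_kernel z w * ff r w - cz z * complex_of_real (psi r w) \<partial>lborel)"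
  have "cz z * complex_of_real A = X - Y" using eq unfolding X_def Y_def by simp
  then have "cmod (cz z) * A \<le> cmod X + cmod Y"
    using norm_triangle_ineq4[of X Y] n by simp
  then have "cmod (cz z) * A \<le> cmod (\<integral>w. hartogs_kernel z w * ff r w \<partial>lborel) + cmod (\<integral>w. hartogs_kernel z w * ff r w - cz z * complex_of_real (psi r w) \<partial>lborel)"
    unfolding X_def Y_def .
  with e show ?thesis unfolding A_def[symmetric] by simp
qed

lemma bp_eq: "0 < r \<Longrightarrow> bergman_proj (ff r) z = (\<integral>w. hartogs_kernel z w * ff r w \<partial>lborel)"
  unfolding bergman_proj_def set_lebesgue_integral_def ind_Kf
  by (rule integral_completion) simp

lemma bp_meas: "0 < r \<Longrightarrow> bergman_proj (ff r) \<in> borel_measurable borel"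
proof -
  assume r: "0 < r"
  have s: "sets (borel \<Otimes>\<^sub>M lborel) = sets (borel :: ((complex \<times> complex) \<times> (complex \<times> complex)) measure)"
    by (metis borel_prod sets_lborel sets_pair_measure_cong)
  have "(\<lambda>p. hartogs_kernel (fst p) (snd p) * ff r (snd p)) \<in> borel_measurable (borel \<Otimes>\<^sub>M lborel)"
    unfolding measurable_cong_sets[OF s refl] by (rule K_meas)
  then have "(\<lambda>(z, w). hartogs_kernel z w * ff r w) \<in> borel_measurable (borel \<Otimes>\<^sub>M lborel)"
    by (simp add: case_prod_beta')
  then have "(\<lambda>z. \<integral>w. hartogs_kernel z w * ff r w \<partial>lborel) \<in> borel_measurable borel"
    by (rule lborel.borel_measurable_lebesgue_integral)
  moreover have "bergman_proj (ff r) = (\<lambda>z. \<integral>w. hartogs_kernel z w * ff r w \<partial>lborel)"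
    by (rule ext) (rule bp_eq[OF r])
  ultimately show ?thesis by simp
qed



definition SH :: "nat \<Rightarrow> (complex \<times> complex) set" where
  "SH k = {w. cmod (fst w) < cmod (snd w) \<and> (1/2)^(Suc k) < cmod (snd w) \<and> cmod (snd w) < (1/2)^k}"

definition hh :: "complex \<times> complex \<Rightarrow> real" where
  "hh w = cmod (snd w) powr (-4)"

lemma SH_borel[measurable]: "SH k \<in> sets borel"
proof -
  have "SH k = {w \<in> space borel. cmod (fst w) < cmod (snd w) \<and> (1/2)^(Suc k) < cmod (snd w) \<and> cmod (snd w) < (1/2)^k}"
    unfolding SH_def by auto
  also have "\<dots> \<in> sets borel" by measurable
  finally show ?thesis .
qed

lemma hh_meas[measurable]: "hh \<in> borel_measurable borel"
  unfolding hh_def by measurable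

lemma DIM_cc: "DIM(complex \<times> complex) = 4"
  by simp

lemma scale_pt:
  fixes x :: "complex \<times> complex" and k :: nat
  defines "c \<equiv> (1/2::real)^k"
  shows "ennreal (\<bar>c\<bar> ^ DIM(complex \<times> complex)) * ennreal (indicator (SH k) (0 + c *\<^sub>R x) * hh (0 + c *\<^sub>R x))
       = ennreal (indicator (SH 0) x * hh x)"
proof -
  have c: "0 < c" unfolding c_def by simp
  obtain x1 x2 where xx: "x = (x1, x2)" by (cases x)
  have n1: "cmod (c *\<^sub>R x1) = c * cmod x1" "cmod (c *\<^sub>R x2) = c * cmod x2" using c by auto
  have mem: "(c *\<^sub>R x \<in> SH k) = (x \<in> SH 0)"
  proof -
    have e: "(1/2::real)^(Suc k) = c * (1/2)" "(1/2::real)^k = c * 1" unfolding c_def by simp_all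
    have A: "(c * (1/2) < c * cmod x2) = (1/2 < cmod x2)" using c by simp
    have B: "(c * cmod x2 < c * 1) = (cmod x2 < 1)" using c by (rule mult_less_cancel_left_pos)
    have C: "(c * cmod x1 < c * cmod x2) = (cmod x1 < cmod x2)" using c by simp
    have "(c *\<^sub>R x \<in> SH k) = (c * cmod x1 < c * cmod x2 \<and> c * (1/2) < c * cmod x2 \<and> c * cmod x2 < c * 1)"
      unfolding SH_def xx e using n1 c by (simp add: abs_of_pos)
    also have "\<dots> = (x \<in> SH 0)" unfolding A B C unfolding SH_def xx by simp
    finally show ?thesis .
  qed
  show ?thesis
  proof (cases "x \<in> SH 0")
    case True
    have p: "cmod x2 > 0" using True unfolding SH_def xx by auto
    have "hh (c *\<^sub>R x) = c powr (-4) * hh x"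
      unfolding hh_def xx using n1 c p by (simp add: powr_mult)
    moreover have "c ^ 4 * c powr (-4) = 1"
      using c by (simp add: powr_minus_divide powr_realpow)
    ultimately have "c ^ 4 * (indicator (SH k) (c *\<^sub>R x) * hh (c *\<^sub>R x)) = indicator (SH 0) x * hh x"
      using True mem by simp
    then show ?thesis
      using c by (simp add: DIM_cc ennreal_mult[symmetric] hh_def)
  next
    case False
    then show ?thesis using mem by simp
  qed
qed

lemma sh_eq: "(\<integral>\<^sup>+ w. ennreal (indicator (SH k) w * hh w) \<partial>lborel) = (\<integral>\<^sup>+ w. ennreal (indicator (SH 0) w * hh w) \<partial>lborel)"
proof -
  define c where "c = (1/2::real)^k"
  have cnz: "c \<noteq> 0" unfolding c_def by simp
  define g where "g = (\<lambda>w. ennreal (indicator (SH k) w * hh w))"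
  have gm: "g \<in> borel_measurable borel" unfolding g_def by measurable
  have M: "(lborel :: (complex \<times> complex) measure) = density (distr lborel borel (\<lambda>x. 0 + c *\<^sub>R x)) (\<lambda>_. ennreal (\<bar>c\<bar> ^ DIM(complex \<times> complex)))"
    by (rule lborel_affine[OF cnz])
  have "(\<integral>\<^sup>+ w. g w \<partial>lborel) = (\<integral>\<^sup>+ w. g w \<partial>(density (distr lborel borel (\<lambda>x. 0 + c *\<^sub>R x)) (\<lambda>_. ennreal (\<bar>c\<bar> ^ DIM(complex \<times> complex)))))"
    by (rule arg_cong[OF M])
  also have "\<dots> = (\<integral>\<^sup>+ w. ennreal (\<bar>c\<bar> ^ DIM(complex \<times> complex)) * g w \<partial>(distr lborel borel (\<lambda>x. 0 + c *\<^sub>R x)))"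
    by (rule nn_integral_density) (use gm in simp_all)
  also have "\<dots> = (\<integral>\<^sup>+ x. ennreal (\<bar>c\<bar> ^ DIM(complex \<times> complex)) * g (0 + c *\<^sub>R x) \<partial>lborel)"
    by (rule nn_integral_distr) (use gm in simp_all)
  also have "\<dots> = (\<integral>\<^sup>+ w. ennreal (indicator (SH 0) w * hh w) \<partial>lborel)"
    unfolding g_def c_def by (rule nn_integral_cong) (rule scale_pt)
  finally show ?thesis unfolding g_def .
qed

definition b0 :: "complex \<times> complex" where "b0 = (0, 3/4)"

lemma ball_SH0: "indicator (ball b0 (1/10)) w \<le> indicator (SH 0) w * hh w"
proof (cases "w \<in> ball b0 (1/10)")
  case True
  have zc: "w - b0 = (fst w - 0, snd w - 3/4)" by (cases w) (simp add: b0_def)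
  have d: "norm (fst w - 0, snd w - 3/4) < 1/10"
    using True unfolding zc[symmetric] by (simp add: dist_norm norm_minus_commute)
  have a: "cmod (fst w) < 1/10" using norm_fst_le[where x="fst w - 0" and y="snd w - 3/4"] d by simp
  have b: "cmod (snd w - 3/4) < 1/10" using norm_snd_le[where x="fst w - 0" and y="snd w - 3/4"] d by simp
  have b1: "cmod (snd w) > 6/10"
    using norm_triangle_ineq2[of "3/4" "snd w"] b by (simp add: norm_minus_commute)
  have b2: "cmod (snd w) < 9/10"
    using norm_triangle_ineq2[of "snd w" "3/4"] b by simp
  have inS: "w \<in> SH 0" unfolding SH_def using a b1 b2 by auto
  have "1 \<le> cmod (snd w) powr (-4)"
  proof -
    have "cmod (snd w) > 0" using b1 by linarith
    then have "1 = cmod (snd w) powr 0" by simp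
    also have "\<dots> \<le> cmod (snd w) powr (-4)"
      using b1 b2 by (intro powr_mono') auto
    finally show ?thesis .
  qed
  then show ?thesis using True inS by (simp add: hh_def)
next
  case False
  then show ?thesis using hh_def by (simp add: indicator_def)
qed

definition e0 :: real where "e0 = unit_ball_vol (real DIM(complex \<times> complex)) * (1/10) ^ DIM(complex \<times> complex)"

lemma e0_pos: "0 < e0"
  unfolding e0_def by simp

lemma sh0_ge: "ennreal e0 \<le> (\<integral>\<^sup>+ w. ennreal (indicator (SH 0) w * hh w) \<partial>lborel)"
proof -
  have "ennreal e0 = emeasure lborel (ball b0 (1/10))"
    unfolding e0_def by (simp add: emeasure_ball)
  also have "\<dots> = (\<integral>\<^sup>+ w. indicator (ball b0 (1/10)) w \<partial>lborel)" by simp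
  also have "\<dots> = (\<integral>\<^sup>+ w. ennreal (indicator (ball b0 (1/10)) w) \<partial>lborel)" by (simp add: ennreal_indicator)
  also have "\<dots> \<le> (\<integral>\<^sup>+ w. ennreal (indicator (SH 0) w * hh w) \<partial>lborel)"
    by (intro nn_integral_mono ennreal_leI ball_SH0)
  finally show ?thesis .
qed

lemma step_pt:
  "ennreal (psi ((1/2)^Suc n) w) \<ge> ennreal (psi ((1/2)^n) w) + ennreal (indicator (SH n) w * hh w)"
proof -
  have "psi ((1/2)^n) w + indicator (SH n) w * hh w \<le> psi ((1/2)^Suc n) w"
  proof (cases "w \<in> RR ((1/2)^n)")
    case True
    have h1: "cmod (fst w) < cmod (snd w)" "(1/2::real)^n < cmod (snd w)" "cmod (snd w) < 1"
      using True unfolding RR_def by auto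
    have h2: "(1/2::real)^Suc n \<le> (1/2)^n" by simp
    have "(1/2::real)^Suc n < cmod (snd w)" using h1(2) h2 by linarith
    then have "w \<in> RR ((1/2)^Suc n)" "w \<notin> SH n" using h1 unfolding RR_def SH_def by auto
    then show ?thesis using True by (simp add: psi_def hh_def)
  next
    case False
    note F = False
    show ?thesis
    proof (cases "w \<in> SH n")
      case True
      have "(1/2::real)^n \<le> 1" by (simp add: power_le_one)
      then have "w \<in> RR ((1/2)^Suc n)" using True norm_ge_zero[of "snd w"] unfolding RR_def SH_def by auto
      then show ?thesis using True F by (simp add: psi_def hh_def)
    next
      case False
      then show ?thesis using F psi_nonneg[of "(1/2)^Suc n" w] by (simp add: psi_def)
    qed
  qed
  moreover have "0 \<le> indicator (SH n) w * hh w" by (simp add: hh_def)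
  ultimately show ?thesis using psi_nonneg[of "(1/2)^n" w]
    by (simp add: ennreal_plus[symmetric] del: ennreal_plus)
qed

lemma B_ge: "(\<integral>\<^sup>+ w. ennreal (psi ((1/2)^n) w) \<partial>lborel) \<ge> of_nat n * ennreal e0"
proof (induction n)
  case 0 then show ?case by simp
next
  case (Suc n)
  have "of_nat (Suc n) * ennreal e0 = of_nat n * ennreal e0 + ennreal e0"
    by (simp add: distrib_right)
  also have "\<dots> \<le> (\<integral>\<^sup>+ w. ennreal (psi ((1/2)^n) w) \<partial>lborel) + (\<integral>\<^sup>+ w. ennreal (indicator (SH n) w * hh w) \<partial>lborel)"
    using Suc.IH sh0_ge sh_eq[of n] by (intro add_mono) simp_all
  also have "\<dots> = (\<integral>\<^sup>+ w. ennreal (psi ((1/2)^n) w) + ennreal (indicator (SH n) w * hh w) \<partial>lborel)"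
    by (rule nn_integral_add[symmetric]) simp_all
  also have "\<dots> \<le> (\<integral>\<^sup>+ w. ennreal (psi ((1/2)^Suc n) w) \<partial>lborel)"
    by (intro nn_integral_mono step_pt)
  finally show ?case .
qed

lemma A_ge:
  "real n * e0 \<le> (\<integral>w. psi ((1/2)^n) w \<partial>lborel)"
proof -
  have r: "0 < (1/2::real)^n" by simp
  have "(\<integral>\<^sup>+ w. ennreal (psi ((1/2)^n) w) \<partial>lborel) = ennreal (\<integral>w. psi ((1/2)^n) w \<partial>lborel)"
    by (rule nn_integral_eq_integral[OF psi_int[OF r]]) (simp add: psi_nonneg)
  then have "ennreal (real n * e0) \<le> ennreal (\<integral>w. psi ((1/2)^n) w \<partial>lborel)"
    using B_ge[of n] e0_pos by (simp add: ennreal_mult ennreal_of_nat_eq_real_of_nat)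
  moreover have "0 \<le> (\<integral>w. psi ((1/2)^n) w \<partial>lborel)" by (simp add: psi_nonneg)
  ultimately show ?thesis by simp
qed



lemma arith_final:
  fixes m0 C A :: real
  assumes m0: "0 < m0" and C: "0 < C" and A: "0 < A"
    and h: "m0 \<le> C * A / ((A / pi^2) powr (4/3))"
  shows "A \<le> pi^2 * (C * pi^2 / m0)^3"
proof -
  define t where "t = A / pi^2"
  have t: "0 < t" unfolding t_def using A by simp
  have At: "A = pi^2 * t" unfolding t_def by simp
  have tp: "t powr (4/3) = t * t powr (1/3)"
  proof -
    have "t powr (4/3) = t powr (1 + 1/3)" by simp
    also have "\<dots> = t powr 1 * t powr (1/3)" by (rule powr_add)
    finally show ?thesis using t by simp
  qed
  have s: "0 < t powr (1/3)" using t by simp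
  have h1: "m0 \<le> C * A / (t powr (4/3))" using h unfolding t_def .
  have h2: "C * A / (t powr (4/3)) = C * pi^2 / t powr (1/3)"
    unfolding tp At using t by simp
  have "m0 \<le> C * pi^2 / t powr (1/3)" using h1 h2 by simp
  then have k: "t powr (1/3) \<le> C * pi^2 / m0"
    using m0 s by (simp add: field_simps)
  have "t = (t powr (1/3)) ^ 3"
    using t by (simp add: powr_realpow[symmetric] powr_powr)
  also have "\<dots> \<le> (C * pi^2 / m0) ^ 3"
    using k s by (intro power_mono) auto
  finally show ?thesis unfolding At by simp
qed



definition m0 :: real where "m0 = unit_ball_vol (real DIM(complex \<times> complex)) * (1/1000) ^ DIM(complex \<times> complex)"

lemma m0_pos: "0 < m0" unfolding m0_def by simp

lemma level_ge:
  assumes n: "1 \<le> n"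
  defines "r \<equiv> (1/2::real)^n"
  defines "A \<equiv> (\<integral>w. psi r w \<partial>lborel)"
  shows "ennreal m0 \<le> emeasure lebesgue {z \<in> hartogs. A / pi^2 < cmod (bergman_proj (ff r) z)}"
proof -
  have r: "0 < r" unfolding r_def by simp
  have "0 < real n * e0" using n e0_pos by simp
  then have A: "0 < A" using A_ge[of n] unfolding A_def r_def by linarith
  have sub: "ball c0 (1/1000) \<subseteq> {z \<in> hartogs. A / pi^2 < cmod (bergman_proj (ff r) z)}"
  proof
    fix z assume z: "z \<in> ball c0 (1/1000)"
    have zH: "z \<in> hartogs" using ball_props[OF z] by simp
    have s1: "0 < cmod (snd z)" "cmod (snd z) < 2/3" using ball_props[OF z] by simp_all
    have cz: "cmod (cz z) = 1 / (pi^2 * cmod (snd z))"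
      unfolding cz_def by (simp add: norm_divide norm_mult norm_power)
    have "A / pi^2 < (2/3) * (cmod (cz z) * A)"
    proof -
      have "(2/3) * (cmod (cz z) * A) = (A / pi^2) * ((2/3) / cmod (snd z))"
        unfolding cz by (simp add: field_simps)
      moreover have "1 < (2/3) / cmod (snd z)" using s1 by (simp add: field_simps)
      moreover have "0 < A / pi^2" using A by simp
      ultimately show ?thesis by (metis mult.right_neutral mult_strict_left_mono)
    qed
    also have "\<dots> \<le> cmod (bergman_proj (ff r) z)"
      unfolding bp_eq[OF r] A_def by (rule main_est[OF z r])
    finally show "z \<in> {z \<in> hartogs. A / pi^2 < cmod (bergman_proj (ff r) z)}" using zH by simp
  qed
  have meas: "{z \<in> hartogs. A / pi^2 < cmod (bergman_proj (ff r) z)} \<in> sets lebesgue"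
  proof -
    have "{z \<in> hartogs. A / pi^2 < cmod (bergman_proj (ff r) z)} = {z \<in> space borel. A / pi^2 < cmod (bergman_proj (ff r) z)} \<inter> hartogs"
      by auto
    also have "\<dots> \<in> sets borel"
      using bp_meas[OF r] by measurable
    finally show ?thesis by simp
  qed
  have "ennreal m0 = emeasure lborel (ball c0 (1/1000))"
    unfolding m0_def by (simp add: emeasure_ball)
  also have "\<dots> = emeasure lebesgue (ball c0 (1/1000))" by simp
  also have "\<dots> \<le> emeasure lebesgue {z \<in> hartogs. A / pi^2 < cmod (bergman_proj (ff r) z)}"
    by (rule emeasure_mono[OF sub meas])
  finally show ?thesis .
qed

theorem theorem4p1:
  shows "\<not> (\<exists>C::real. C > 0 \<and>
     (\<forall>f :: complex \<times> complex \<Rightarrow> complex.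
        set_borel_measurable lebesgue hartogs f \<longrightarrow>
        (\<integral>\<^sup>+ w \<in> hartogs. ennreal (cmod (f w) powr (4/3)) \<partial>lebesgue) < \<infinity> \<longrightarrow>
        (\<forall>z\<in>hartogs. set_integrable lebesgue hartogs (\<lambda>w. hartogs_kernel z w * f w)) \<longrightarrow>
        (\<forall>t::real. t > 0 \<longrightarrow>
           emeasure lebesgue {z \<in> hartogs. cmod (bergman_proj f z) > t}
             \<le> ennreal C * (\<integral>\<^sup>+ w \<in> hartogs. ennreal (cmod (f w) powr (4/3)) \<partial>lebesgue)
                 / ennreal (t powr (4/3)))))"
proof
  assume "\<exists>C::real. C > 0 \<and>
     (\<forall>f :: complex \<times> complex \<Rightarrow> complex.
        set_borel_measurable lebesgue hartogs f \<longrightarrow>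
        (\<integral>\<^sup>+ w \<in> hartogs. ennreal (cmod (f w) powr (4/3)) \<partial>lebesgue) < \<infinity> \<longrightarrow>
        (\<forall>z\<in>hartogs. set_integrable lebesgue hartogs (\<lambda>w. hartogs_kernel z w * f w)) \<longrightarrow>
        (\<forall>t::real. t > 0 \<longrightarrow>
           emeasure lebesgue {z \<in> hartogs. cmod (bergman_proj f z) > t}
             \<le> ennreal C * (\<integral>\<^sup>+ w \<in> hartogs. ennreal (cmod (f w) powr (4/3)) \<partial>lebesgue)
                 / ennreal (t powr (4/3))))"
  then obtain C :: real where C: "C > 0" and HC: "\<forall>f :: complex \<times> complex \<Rightarrow> complex.
        set_borel_measurable lebesgue hartogs f \<longrightarrow>
        (\<integral>\<^sup>+ w \<in> hartogs. ennreal (cmod (f w) powr (4/3)) \<partial>lebesgue) < \<infinity> \<longrightarrow>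
        (\<forall>z\<in>hartogs. set_integrable lebesgue hartogs (\<lambda>w. hartogs_kernel z w * f w)) \<longrightarrow>
        (\<forall>t::real. t > 0 \<longrightarrow>
           emeasure lebesgue {z \<in> hartogs. cmod (bergman_proj f z) > t}
             \<le> ennreal C * (\<integral>\<^sup>+ w \<in> hartogs. ennreal (cmod (f w) powr (4/3)) \<partial>lebesgue)
                 / ennreal (t powr (4/3)))"
    by (elim exE conjE)
  define K where "K = pi^2 * (C * pi^2 / m0)^3"
  have bound: "real n * e0 \<le> K" if n: "1 \<le> n" for n :: nat
  proof -
    define r where "r = (1/2::real)^n"
    define A where "A = (\<integral>w. psi r w \<partial>lborel)"
    have r: "0 < r" unfolding r_def by simp
    have nA: "real n * e0 \<le> A" using A_ge[of n] unfolding A_def r_def .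
    have "0 < real n * e0" using n e0_pos by simp
    then have A: "0 < A" using nA by linarith
    have nn: "(\<integral>\<^sup>+ w \<in> hartogs. ennreal (cmod (ff r w) powr (4/3)) \<partial>lebesgue) = ennreal A"
    proof -
      have "(\<integral>\<^sup>+ w \<in> hartogs. ennreal (cmod (ff r w) powr (4/3)) \<partial>lebesgue)
          = (\<integral>\<^sup>+ w. ennreal (psi r w) \<partial>lebesgue)"
      proof (rule nn_integral_cong)
        fix w
        show "ennreal (cmod (ff r w) powr (4/3)) * indicator hartogs w = ennreal (psi r w)"
        proof (cases "w \<in> RR r")
          case True
          then have "w \<in> hartogs" using RR_sub by blast
          then show ?thesis by (simp add: ff_powr)
        next
          case False
          then show ?thesis by (simp add: ff_out psi_def)
        qed
      qed
      also have "\<dots> = (\<integral>\<^sup>+ w. ennreal (psi r w) \<partial>lborel)" by (rule nn_integral_completion)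
      also have "\<dots> = ennreal A"
        unfolding A_def by (rule nn_integral_eq_integral[OF psi_int[OF r]]) (simp add: psi_nonneg)
      finally show ?thesis .
    qed
    have m1: "set_borel_measurable lebesgue hartogs (ff r)"
      unfolding set_borel_measurable_def ind_ff
      by (rule measurable_completion) simp
    have m2: "(\<integral>\<^sup>+ w \<in> hartogs. ennreal (cmod (ff r w) powr (4/3)) \<partial>lebesgue) < \<infinity>"
      unfolding nn by simp
    have m3: "\<forall>z\<in>hartogs. set_integrable lebesgue hartogs (\<lambda>w. hartogs_kernel z w * ff r w)"
    proof
      fix z assume z: "z \<in> hartogs"
      show "set_integrable lebesgue hartogs (\<lambda>w. hartogs_kernel z w * ff r w)"
        unfolding set_integrable_def ind_Kf
        using Kf_int[OF z r] by (subst integrable_completion) simp_all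
    qed
    have tpos: "0 < A / pi^2" using A by simp
    have "emeasure lebesgue {z \<in> hartogs. cmod (bergman_proj (ff r) z) > A / pi^2}
        \<le> ennreal C * ennreal A / ennreal ((A / pi^2) powr (4/3))"
      using HC[rule_format, OF m1 m2 m3[rule_format] tpos] unfolding nn .
    moreover have "ennreal m0 \<le> emeasure lebesgue {z \<in> hartogs. cmod (bergman_proj (ff r) z) > A / pi^2}"
      using level_ge[OF n] unfolding r_def[symmetric] A_def[symmetric] by simp
    ultimately have "ennreal m0 \<le> ennreal C * ennreal A / ennreal ((A / pi^2) powr (4/3))"
      by (rule order_trans[rotated])
    also have "\<dots> = ennreal (C * A / ((A / pi^2) powr (4/3)))"
      using C A by (simp add: ennreal_mult[symmetric] divide_ennreal)
    finally have "m0 \<le> C * A / ((A / pi^2) powr (4/3))"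
      using C A by (subst (asm) ennreal_le_iff) auto
    then have "A \<le> K" unfolding K_def by (rule arith_final[OF m0_pos C A])
    then show ?thesis using nA by simp
  qed
  obtain n :: nat where nK: "K / e0 < real n" using reals_Archimedean2 by blast
  have "real (Suc n) * e0 \<le> K" by (rule bound) simp
  moreover have "K < real (Suc n) * e0"
  proof -
    have "K / e0 < real (Suc n)" using nK by simp
    then show ?thesis using e0_pos by (simp add: divide_less_eq)
  qed
  ultimately show False by simp
qed

end
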